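(* Let $a,b\in\mathbb{Q}$ be such that $f(x)=x^{12}+ax^6+b$ is irreducible over $\mathbb{Q}$, and let $\theta$ be a root of $f(x)$. Then for every $r\in\mathbb{Q}\setminus\mathbb{Q}^2$, we have $r\in\mathbb{Q}(\theta)^2$ if and only if at least one of $r(a^2-4b)$, $r(-a+2\sqrt{b})$, $r(-a-2\sqrt{b})$ lies in $\mathbb{Q}^2$.
   Context: For a field $K$, $K^2$ denotes the set of squares in $K$; $\mathbb{Q}^2$ is the set of rational squares. $\sqrt{b}$ denotes a fixed complex square root of $b$. *)

theory Defs
  imports Complex_Main "HOL-Computational_Algebra.Polynomial"
begin

definition subfield_C :: "complex set \<Rightarrow> bool" where
  "subfield_C S \<longleftrightarrow> 0 \<in> S \<and> 1 \<in> S \<and>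
     (\<forall>x\<in>S. \<forall>y\<in>S. x + y \<in> S \<and> x - y \<in> S \<and> x * y \<in> S) \<and>
     (\<forall>x\<in>S. x \<noteq> 0 \<longrightarrow> inverse x \<in> S)"

text \<open>The field Q(theta): the smallest subfield of C containing theta
  (every subfield of C contains Q).\<close>
definition Q_adj :: "complex \<Rightarrow> complex set" where
  "Q_adj \<theta> = \<Inter>{S. subfield_C S \<and> \<theta> \<in> S}"

definition squares_in :: "complex set \<Rightarrow> complex set" where
  "squares_in K = {y ^ 2 | y. y \<in> K}"

definition rat_squares :: "complex set" where
  "rat_squares = {of_rat (q ^ 2) | q. True}"

end

theory Submission
  imports Defs "HOL-Computational_Algebra.Computational_Algebra" "HOL-Computational_Algebra.Field_as_Ring"
begin


locale setup12 =
  fixes a b :: rat and \<theta> :: complex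
  assumes irr: "irreducible (monom 1 12 + monom a 6 + [:b:] :: rat poly)"
    and root: "poly (map_poly of_rat (monom 1 12 + monom a 6 + [:b:])) \<theta> = 0"
begin

definition fp :: "rat poly" where "fp = monom 1 12 + monom a 6 + [:b:]"
definition ev :: "rat poly \<Rightarrow> complex" where "ev p = poly (map_poly of_rat p) \<theta>"

lemma mp_add: "map_poly (of_rat::rat\<Rightarrow>complex) (p + q) = map_poly of_rat p + map_poly of_rat q"
  by (rule poly_eqI) (simp add: coeff_map_poly of_rat_add)
lemma mp_mult: "map_poly (of_rat::rat\<Rightarrow>complex) (p * q) = map_poly of_rat p * map_poly of_rat q"
  by (rule poly_eqI) (simp add: coeff_map_poly coeff_mult of_rat_add of_rat_mult of_rat_sum)
lemma ev_add[simp]: "ev (p + q) = ev p + ev q"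
  unfolding ev_def by (simp add: mp_add)
lemma ev_mult[simp]: "ev (p * q) = ev p * ev q"
  unfolding ev_def by (simp add: mp_mult)
lemma ev_const[simp]: "ev [:c:] = of_rat c"
  unfolding ev_def by (simp add: map_poly_pCons)
lemma ev_one[simp]: "ev 1 = 1"
  unfolding ev_def by simp
lemma ev_fp: "ev fp = 0" using root unfolding ev_def fp_def .

lemma rel: "\<theta>^12 + of_rat a * \<theta>^6 + of_rat b = 0"
  using root by (simp add: map_poly_monom poly_monom mp_add map_poly_pCons)

lemma deg_fp: "degree fp = 12"
proof -
  have "degree (monom a 6 :: rat poly) < degree (monom (1::rat) 12)"
    using degree_monom_le[of a 6] by (simp add: degree_monom_eq)
  then have 1: "degree (monom 1 12 + monom a 6 :: rat poly) = 12"
    by (simp add: degree_add_eq_left degree_monom_eq)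
  then show ?thesis unfolding fp_def by (subst degree_add_eq_left) auto
qed

lemma fp_nz: "fp \<noteq> 0" using deg_fp by auto

lemma ev_zero_dvd: assumes "ev p = 0" shows "fp dvd p"
proof (rule ccontr)
  assume "\<not> fp dvd p"
  have "prime_elem fp" using irr unfolding fp_def by (simp add: field_poly_irreducible_imp_prime)
  then have "coprime fp p" using \<open>\<not> fp dvd p\<close> by (rule prime_elem_imp_coprime)
  then have g: "gcd fp p = 1" by simp
  have "fst (bezout_coefficients fp p) * fp + snd (bezout_coefficients fp p) * p = 1"
    using bezout_coefficients_fst_snd[of fp p] g by simp
  then have "ev (fst (bezout_coefficients fp p) * fp + snd (bezout_coefficients fp p) * p) = ev 1" by simp
  then show False using assms ev_fp by simp
qed

lemma ev_zero[simp]: "ev 0 = 0" unfolding ev_def by simp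
lemma ev_monom[simp]: "ev (monom c n) = of_rat c * \<theta>^n"
  unfolding ev_def by (simp add: map_poly_monom poly_monom)
lemma ev_sum: "ev (sum f A) = (\<Sum>x\<in>A. ev (f x))"
  by (induction A rule: infinite_finite_induct) auto
lemma ev_x[simp]: "ev [:0,1:] = \<theta>"
  unfolding ev_def by (simp add: map_poly_pCons)

lemma indep12:
  assumes "(\<Sum>j<12. of_rat (c j) * \<theta>^j) = 0" "j < 12"
  shows "c j = 0"
proof -
  define g where "g = (\<Sum>j<12. monom (c j) j)"
  have cg: "coeff g n = (if n < 12 then c n else 0)" for n
    unfolding g_def by (simp add: coeff_sum coeff_monom)
  have "ev g = 0" using assms(1) unfolding g_def ev_sum by simp
  then have d: "fp dvd g" by (rule ev_zero_dvd)
  have "degree g \<le> 11" by (rule degree_le) (simp add: cg)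
  have "g = 0"
  proof (rule ccontr)
    assume "g \<noteq> 0"
    then have "degree fp \<le> degree g" using d by (rule dvd_imp_degree_le[rotated])
    then show False using deg_fp \<open>degree g \<le> 11\<close> by simp
  qed
  then show ?thesis using cg[of j] assms(2) by simp
qed

definition R :: "complex set" where "R = {ev p | p. True}"

lemma R_ev[simp]: "ev p \<in> R" unfolding R_def by blast

lemma R_inverse: assumes "x \<in> R" "x \<noteq> 0" shows "inverse x \<in> R"
proof -
  obtain p where p: "x = ev p" using assms(1) unfolding R_def by blast
  have "\<not> fp dvd p"
  proof
    assume "fp dvd p" then obtain k where "p = fp * k" by (elim dvdE)
    then show False using p assms(2) ev_fp by simp
  qed
  have "prime_elem fp" using irr unfolding fp_def by (simp add: field_poly_irreducible_imp_prime)
  then have "coprime fp p" using \<open>\<not> fp dvd p\<close> by (rule prime_elem_imp_coprime)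
  then have g: "gcd fp p = 1" by simp
  have "fst (bezout_coefficients fp p) * fp + snd (bezout_coefficients fp p) * p = 1"
    using bezout_coefficients_fst_snd[of fp p] g by simp
  then have "ev (fst (bezout_coefficients fp p) * fp + snd (bezout_coefficients fp p) * p) = ev 1" by simp
  then have "ev (snd (bezout_coefficients fp p)) * x = 1" using p ev_fp by simp
  then have "inverse x = ev (snd (bezout_coefficients fp p))"
    by (metis inverse_unique mult.commute)
  then show ?thesis by simp
qed

lemma R_subfield: "subfield_C R"
  unfolding subfield_C_def
proof (intro conjI ballI impI)
  show "0 \<in> R" using R_ev[of 0] by simp
  show "1 \<in> R" using R_ev[of 1] by simp
  fix x y assume "x \<in> R" "y \<in> R"
  then obtain p q where "x = ev p" "y = ev q" unfolding R_def by blast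
  then show "x + y \<in> R" "x * y \<in> R" "x - y \<in> R"
  proof -
    have "ev (p - q) = ev p - ev q" unfolding ev_def
      by (subst poly_diff[symmetric], rule arg_cong[where f="\<lambda>u. poly u \<theta>"], rule poly_eqI) (simp add: coeff_map_poly of_rat_diff)
    then show "x + y \<in> R" "x * y \<in> R" "x - y \<in> R"
      using R_ev[of "p+q"] R_ev[of "p*q"] R_ev[of "p-q"] \<open>x = ev p\<close> \<open>y = ev q\<close> by auto
  qed
qed (rule R_inverse)

lemma Qadj_sub_R: "Q_adj \<theta> \<subseteq> R"
  unfolding Q_adj_def using R_subfield R_ev[of "[:0,1:]"] by auto

lemma represent:
  assumes "t \<in> Q_adj \<theta>"
  obtains c where "t = (\<Sum>j<12. of_rat (c j) * \<theta>^j)"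
proof -
  obtain p where p: "t = ev p" using assms Qadj_sub_R unfolding R_def by blast
  define q where "q = p mod fp"
  have "p = (p div fp) * fp + q" unfolding q_def by (metis div_mult_mod_eq)
  then have "ev p = ev q" by (metis ev_add ev_mult ev_fp mult_zero_right add_0)
  have "degree q < 12"
  proof (cases "q = 0")
    case False then show ?thesis unfolding q_def using degree_mod_less[of fp p] fp_nz deg_fp
      by (metis q_def)
  qed simp
  have "q = (\<Sum>j<12. monom (coeff q j) j)"
    by (rule poly_eqI) (use \<open>degree q < 12\<close> in \<open>auto simp: coeff_sum coeff_monom coeff_eq_0\<close>)
  then have "ev q = (\<Sum>j<12. of_rat (coeff q j) * \<theta>^j)"
    by (metis (no_types, lifting) ev_sum ev_monom sum.cong)
  then show ?thesis using that p \<open>ev p = ev q\<close> by simp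
qed

lemma sum12: "(\<Sum>j<12. of_rat (([p0,p1,p2,p3,p4,p5,q0,q1,q2,q3,q4,q5]::rat list) ! j) * \<theta>^j) = of_rat p0 + of_rat p1 * \<theta> + of_rat p2 * \<theta>^2 + of_rat p3 * \<theta>^3 + of_rat p4 * \<theta>^4 + of_rat p5 * \<theta>^5 + \<theta>^6 * (of_rat q0 + of_rat q1 * \<theta> + of_rat q2 * \<theta>^2 + of_rat q3 * \<theta>^3 + of_rat q4 * \<theta>^4 + of_rat q5 * \<theta>^5)"
  by (simp add: eval_nat_numeral algebra_simps)

definition inF :: "complex \<Rightarrow> bool" where
  "inF z \<longleftrightarrow> (\<exists>p q. z = of_rat p + of_rat q * \<theta>^6)"

lemma inF_rat[simp]: "inF (of_rat p)" unfolding inF_def by (rule exI[of _ p], rule exI[of _ 0]) simp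
lemma inF_0[simp]: "inF 0" using inF_rat[of 0] by simp
lemma inF_1[simp]: "inF 1" using inF_rat[of 1] by simp
lemma inF_y[simp]: "inF (\<theta>^6)" unfolding inF_def by (rule exI[of _ 0], rule exI[of _ 1]) simp
lemma inF_add[simp]: "inF x \<Longrightarrow> inF y \<Longrightarrow> inF (x + y)"
proof -
  assume "inF x" "inF y"
  then obtain p q p' q' where "x = of_rat p + of_rat q * \<theta>^6" "y = of_rat p' + of_rat q' * \<theta>^6"
    unfolding inF_def by blast
  then have "x + y = of_rat (p+p') + of_rat (q+q') * \<theta>^6" by (simp add: of_rat_add algebra_simps)
  then show ?thesis unfolding inF_def by blast
qed
lemma inF_uminus[simp]: "inF x \<Longrightarrow> inF (- x)"
proof -
  assume "inF x"
  then obtain p q where "x = of_rat p + of_rat q * \<theta>^6"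
    unfolding inF_def by blast
  then have "- x = of_rat (-p) + of_rat (-q) * \<theta>^6" by (simp add: of_rat_minus)
  then show ?thesis unfolding inF_def by blast
qed
lemma inF_diff[simp]: "inF x \<Longrightarrow> inF y \<Longrightarrow> inF (x - y)"
  using inF_add[of x "-y"] by simp

lemma yy: "\<theta>^6 * \<theta>^6 = - of_rat a * \<theta>^6 - of_rat b"
proof -
  have "\<theta>^6 * \<theta>^6 = \<theta>^12" by (simp flip: power_add)
  then show ?thesis using rel by (simp add: algebra_simps eq_neg_iff_add_eq_0)
qed

lemma inF_mult[simp]: assumes "inF x" "inF z" shows "inF (x * z)"
proof -
  obtain p q p' q' where x: "x = of_rat p + of_rat q * \<theta>^6" and z: "z = of_rat p' + of_rat q' * \<theta>^6"
    using assms unfolding inF_def by blast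
  have "x * z = of_rat p * of_rat p' + (of_rat p * of_rat q' + of_rat q * of_rat p') * \<theta>^6 + of_rat q * of_rat q' * (\<theta>^6 * \<theta>^6)"
    unfolding x z by algebra
  also have "\<dots> = of_rat (p*p' - b*q*q') + of_rat (p*q' + q*p' - a*q*q') * \<theta>^6"
    unfolding yy by (simp add: of_rat_add of_rat_mult of_rat_diff algebra_simps)
  finally show ?thesis unfolding inF_def by blast
qed
lemma inF_power[simp]: "inF x \<Longrightarrow> inF (x ^ n)"
  by (induction n) auto

lemma indepF6:
  assumes "inF X0" "inF X1" "inF X2" "inF X3" "inF X4" "inF X5"
    and "X0 + X1 * \<theta> + X2 * \<theta>^2 + X3 * \<theta>^3 + X4 * \<theta>^4 + X5 * \<theta>^5 = 0"
  shows "X0 = 0 \<and> X1 = 0 \<and> X2 = 0 \<and> X3 = 0 \<and> X4 = 0 \<and> X5 = 0"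
proof -
  obtain p0 q0 where X0: "X0 = of_rat p0 + of_rat q0 * \<theta>^6" using assms(1) unfolding inF_def by blast
  obtain p1 q1 where X1: "X1 = of_rat p1 + of_rat q1 * \<theta>^6" using assms(2) unfolding inF_def by blast
  obtain p2 q2 where X2: "X2 = of_rat p2 + of_rat q2 * \<theta>^6" using assms(3) unfolding inF_def by blast
  obtain p3 q3 where X3: "X3 = of_rat p3 + of_rat q3 * \<theta>^6" using assms(4) unfolding inF_def by blast
  obtain p4 q4 where X4: "X4 = of_rat p4 + of_rat q4 * \<theta>^6" using assms(5) unfolding inF_def by blast
  obtain p5 q5 where X5: "X5 = of_rat p5 + of_rat q5 * \<theta>^6" using assms(6) unfolding inF_def by blast
  note X = X0 X1 X2 X3 X4 X5
  define c where "c = (!) ([p0,p1,p2,p3,p4,p5,q0,q1,q2,q3,q4,q5]::rat list)"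
  have "(\<Sum>j<12. of_rat (c j) * \<theta>^j) = X0 + X1 * \<theta> + X2 * \<theta>^2 + X3 * \<theta>^3 + X4 * \<theta>^4 + X5 * \<theta>^5"
    unfolding c_def sum12 X by (simp add: algebra_simps)
  then have h: "(\<Sum>j<12. of_rat (c j) * \<theta>^j) = 0" using assms(7) by simp
  have "c j = 0" if "j < 12" for j using indep12[OF h that] .
  from this[of 0] this[of 1] this[of 2] this[of 3] this[of 4] this[of 5]
       this[of 6] this[of 7] this[of 8] this[of 9] this[of 10] this[of 11]
  show ?thesis unfolding c_def X by simp
qed

lemma indepF1: assumes "of_rat p + of_rat q * \<theta>^6 = 0" shows "p = 0" "q = 0"
proof -
  define c where "c = (!) ([p,0,0,0,0,0,q,0,0,0,0,0]::rat list)"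
  have h: "(\<Sum>j<12. of_rat (c j) * \<theta>^j) = 0" unfolding c_def sum12 using assms by (simp add: algebra_simps)
  show "p = 0" using indep12[OF h, of 0] unfolding c_def by simp
  show "q = 0" using indep12[OF h, of 6] unfolding c_def by simp
qed

lemma theta_nz: "\<theta> \<noteq> 0"
  using indepF1(2)[of 0 1] by auto

lemma indepF3:
  assumes "inF A" "inF B" "inF C" "A + B * \<theta>^2 + C * \<theta>^4 = 0"
  shows "A = 0" "B = 0" "C = 0"
  using indepF6[of A 0 B 0 C 0] assms by auto

end

context setup12 begin

definition Ev :: "complex \<Rightarrow> bool" where
  "Ev z \<longleftrightarrow> (\<exists>A B C. inF A \<and> inF B \<and> inF C \<and> z = A + B * \<theta>^2 + C * \<theta>^4)"

lemma EvI: "inF A \<Longrightarrow> inF B \<Longrightarrow> inF C \<Longrightarrow> z = A + B * \<theta>^2 + C * \<theta>^4 \<Longrightarrow> Ev z"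
  unfolding Ev_def by blast

lemma Ev_F: "inF A \<Longrightarrow> Ev A" by (rule EvI[of A 0 0]) auto

lemma Ev_add: assumes "Ev u" "Ev v" shows "Ev (u + v)"
proof -
  obtain A B C A' B' C' where "inF A" "inF B" "inF C" "u = A + B * \<theta>^2 + C * \<theta>^4"
    "inF A'" "inF B'" "inF C'" "v = A' + B' * \<theta>^2 + C' * \<theta>^4" using assms unfolding Ev_def by blast
  then show ?thesis by (intro EvI[of "A+A'" "B+B'" "C+C'"]) (auto simp: algebra_simps)
qed

lemma Ev_diff: assumes "Ev u" "Ev v" shows "Ev (u - v)"
proof -
  obtain A B C A' B' C' where "inF A" "inF B" "inF C" "u = A + B * \<theta>^2 + C * \<theta>^4"
    "inF A'" "inF B'" "inF C'" "v = A' + B' * \<theta>^2 + C' * \<theta>^4" using assms unfolding Ev_def by blast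
  then show ?thesis by (intro EvI[of "A-A'" "B-B'" "C-C'"]) (auto simp: algebra_simps)
qed

lemma sq_id: "(A + B * x^2 + C * x^4)^2 = (A^2 + 2*B*C*x^6) + (2*A*B + C^2*x^6) * x^2 + (B^2 + 2*A*C) * (x::complex)^4"
  by algebra

lemma Ev_mult: assumes "Ev u" "Ev v" shows "Ev (u * v)"
proof -
  obtain A B C A' B' C' where "inF A" "inF B" "inF C" "u = A + B * \<theta>^2 + C * \<theta>^4"
    "inF A'" "inF B'" "inF C'" "v = A' + B' * \<theta>^2 + C' * \<theta>^4" using assms unfolding Ev_def by blast
  moreover have "(A + B * \<theta>^2 + C * \<theta>^4) * (A' + B' * \<theta>^2 + C' * \<theta>^4)
     = (A*A' + (B*C' + C*B') * \<theta>^6) + (A*B' + B*A' + C*C'*\<theta>^6) * \<theta>^2 + (A*C' + B*B' + C*A') * \<theta>^4"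
    by algebra
  ultimately show ?thesis by (intro EvI[of "A*A' + (B*C' + C*B') * \<theta>^6" "A*B' + B*A' + C*C'*\<theta>^6" "A*C' + B*B' + C*A'"]) auto
qed

lemma Ev_th2: assumes "Ev u" shows "Ev (\<theta>^2 * u)"
proof -
  obtain A B C where "inF A" "inF B" "inF C" "u = A + B * \<theta>^2 + C * \<theta>^4"
    using assms unfolding Ev_def by blast
  moreover have "\<theta>^2 * (A + B * \<theta>^2 + C * \<theta>^4) = C * \<theta>^6 + A * \<theta>^2 + B * \<theta>^4" by algebra
  ultimately show ?thesis by (intro EvI[of "C * \<theta>^6" A B]) auto
qed

lemma Ev_split: assumes "Ev u" "Ev v" "u + \<theta> * v = 0" shows "u = 0" "v = 0"
proof -
  obtain A B C A' B' C' where "inF A" "inF B" "inF C" and u: "u = A + B * \<theta>^2 + C * \<theta>^4"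
    and "inF A'" "inF B'" "inF C'" and v: "v = A' + B' * \<theta>^2 + C' * \<theta>^4" using assms unfolding Ev_def by blast
  have "A + A' * \<theta> + B * \<theta>^2 + B' * \<theta>^3 + C * \<theta>^4 + C' * \<theta>^5 = u + \<theta> * v"
    unfolding u v by algebra
  then have "A = 0 \<and> A' = 0 \<and> B = 0 \<and> B' = 0 \<and> C = 0 \<and> C' = 0"
    using indepF6[of A A' B B' C C'] assms(3) \<open>inF A\<close> \<open>inF B\<close> \<open>inF C\<close> \<open>inF A'\<close> \<open>inF B'\<close> \<open>inF C'\<close> by simp
  then show "u = 0" "v = 0" using u v by auto
qed

lemma cube: assumes "inF B" "inF C" "B^3 = C^3 * \<theta>^6" shows "C = 0"
proof -
  have "(B - C * \<theta>^2) * (B^2 + (B*C) * \<theta>^2 + C^2 * \<theta>^4) = B^3 - C^3 * \<theta>^6" by algebra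
  then have "(B - C * \<theta>^2) * (B^2 + (B*C) * \<theta>^2 + C^2 * \<theta>^4) = 0" using assms(3) by simp
  then consider "B + (- C) * \<theta>^2 + 0 * \<theta>^4 = 0" | "B^2 + (B*C) * \<theta>^2 + C^2 * \<theta>^4 = 0" by auto
  then show ?thesis
  proof cases
    case 1 then show ?thesis using indepF3(2)[OF _ _ _ 1] assms by simp
  next
    case 2 then have "C^2 = 0" using indepF3(3)[OF _ _ _ 2] assms by simp
    then show ?thesis by simp
  qed
qed

end


lemma of_rat_cplx: "(of_rat q :: complex) = complex_of_real (of_rat q)"
proof -
  obtain n d where "quotient_of q = (n, d)" by (cases "quotient_of q")
  then have "q = of_int n / of_int d" by (rule quotient_of_div)
  then show ?thesis by (simp add: of_rat_divide)
qed

lemma csqrt_rat: "csqrt (of_rat (s^2)) = of_rat \<bar>s\<bar>"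
proof (rule csqrt_unique)
  show "(of_rat \<bar>s\<bar>)\<^sup>2 = (of_rat (s\<^sup>2) :: complex)" by (metis of_rat_power power2_abs)
  show "0 < Re (of_rat \<bar>s\<bar>) \<or> Re (of_rat \<bar>s\<bar>) = 0 \<and> 0 \<le> Im (of_rat \<bar>s\<bar> :: complex)"
    by (subst (1 2 3) of_rat_cplx) (auto simp: less_le)
qed

lemma sub_rat: assumes "subfield_C S" shows "of_rat q \<in> S"
proof -
  have S: "0 \<in> S" "1 \<in> S" "\<And>x y. x \<in> S \<Longrightarrow> y \<in> S \<Longrightarrow> x + y \<in> S \<and> x - y \<in> S \<and> x * y \<in> S"
     "\<And>x. x \<in> S \<Longrightarrow> x \<noteq> 0 \<Longrightarrow> inverse x \<in> S" using assms unfolding subfield_C_def by auto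
  have nat: "of_nat n \<in> S" for n by (induction n) (use S in auto)
  have int: "of_int k \<in> S" for k
  proof (cases "k \<ge> 0")
    case True then show ?thesis using nat[of "nat k"] by simp
  next
    case False then have "of_int k = (0::complex) - of_nat (nat (-k))" by simp
    then show ?thesis using S(1) S(3) nat by metis
  qed
  have inv: "inverse x \<in> S" if "x \<in> S" for x using S(1) S(4) that by (cases "x = 0") auto
  obtain n d where "quotient_of q = (n, d)" by (cases "quotient_of q")
  then have "q = of_int n / of_int d" by (rule quotient_of_div)
  then have "of_rat q = (of_int n :: complex) / of_int d" by (simp add: of_rat_divide)
  then have "of_rat q = (of_int n :: complex) * inverse (of_int d)" by (simp add: divide_inverse)
  then show ?thesis using S(3) int inv by metis
qed

context setup12 begin

lemma Qadj_sf: "subfield_C (Q_adj \<theta>)"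
  unfolding subfield_C_def Q_adj_def by auto

lemma Q_th: "\<theta> \<in> Q_adj \<theta>" unfolding Q_adj_def by auto
lemma Q_rat: "of_rat q \<in> Q_adj \<theta>" using sub_rat[OF Qadj_sf] .
lemma Q_add: "x \<in> Q_adj \<theta> \<Longrightarrow> y \<in> Q_adj \<theta> \<Longrightarrow> x + y \<in> Q_adj \<theta>"
  using Qadj_sf unfolding subfield_C_def by auto
lemma Q_mult: "x \<in> Q_adj \<theta> \<Longrightarrow> y \<in> Q_adj \<theta> \<Longrightarrow> x * y \<in> Q_adj \<theta>"
  using Qadj_sf unfolding subfield_C_def by auto
lemma Q_inv: "x \<in> Q_adj \<theta> \<Longrightarrow> inverse x \<in> Q_adj \<theta>"
  using Qadj_sf unfolding subfield_C_def by (cases "x = 0") auto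
lemma Q_div: "x \<in> Q_adj \<theta> \<Longrightarrow> y \<in> Q_adj \<theta> \<Longrightarrow> x / y \<in> Q_adj \<theta>"
  by (simp add: divide_inverse Q_mult Q_inv)
lemma Q_pow: "x \<in> Q_adj \<theta> \<Longrightarrow> x ^ n \<in> Q_adj \<theta>"
  by (induction n) (auto simp: Q_mult Q_rat[of 1, simplified])

lemma d_nz: "2 * \<theta>^6 + of_rat a \<noteq> 0" "(2 * \<theta>^6 + of_rat a)^2 = of_rat (a^2 - 4*b)"
proof -
  show "2 * \<theta>^6 + of_rat a \<noteq> 0"
  proof
    assume "2 * \<theta>^6 + of_rat a = 0"
    then have "of_rat a + of_rat 2 * \<theta>^6 = 0" by (simp add: algebra_simps)
    then show False using indepF1(2)[of a 2] by simp
  qed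
  have "(2 * \<theta>^6 + of_rat a)^2 = 4 * (\<theta>^6 * \<theta>^6) + 4 * of_rat a * \<theta>^6 + of_rat a ^ 2" by (simp add: power2_eq_square algebra_simps)
  also have "\<dots> = of_rat (a^2 - 4*b)" unfolding yy by (simp add: algebra_simps of_rat_diff of_rat_mult of_rat_power)
  finally show "(2 * \<theta>^6 + of_rat a)^2 = of_rat (a^2 - 4*b)" .
qed

lemma dq_nz: "a^2 - 4*b \<noteq> 0"
  using d_nz by (metis of_rat_0 power_eq_0_iff)

lemma back1: assumes "r * (a^2 - 4*b) = q^2" shows "of_rat r \<in> squares_in (Q_adj \<theta>)"
proof -
  define t where "t = of_rat q / (2 * \<theta>^6 + of_rat a)"
  have "t \<in> Q_adj \<theta>" unfolding t_def
    by (intro Q_div Q_rat Q_add Q_mult Q_pow Q_th) (simp add: Q_rat[of 2, simplified])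
  have "t^2 = of_rat (q^2) / of_rat (a^2 - 4*b)" unfolding t_def using d_nz
    by (simp add: power_divide of_rat_power)
  also have "\<dots> = of_rat r" using assms dq_nz by (simp flip: of_rat_divide) (simp add: field_simps)
  finally show ?thesis unfolding squares_in_def using \<open>t \<in> Q_adj \<theta>\<close> by (metis (mono_tags, lifting) mem_Collect_eq)
qed

lemma back2: assumes "s^2 = b" "r * (-a + 2*s) = q^2" shows "of_rat r \<in> squares_in (Q_adj \<theta>)"
proof -
  define u where "u = \<theta>^3 + of_rat s / \<theta>^3"
  have th3: "\<theta>^3 \<noteq> 0" using theta_nz by simp
  have "u^2 = \<theta>^6 + 2 * of_rat s + of_rat (s^2) / \<theta>^6" unfolding u_def using th3
    by (simp add: power2_eq_square field_simps of_rat_mult flip: power_add)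
  also have "of_rat (s^2) / \<theta>^6 = (- of_rat a * \<theta>^6 - \<theta>^6 * \<theta>^6) / \<theta>^6"
    using yy assms(1) by (simp add: algebra_simps)
  also have "\<dots> = - of_rat a - \<theta>^6" using th3 by (simp add: field_simps power2_eq_square)
  finally have u2: "u^2 = of_rat (-a + 2*s)" by (simp add: of_rat_add of_rat_minus of_rat_mult of_rat_diff)
  have ns: "-a + 2*s \<noteq> 0"
  proof
    assume "-a + 2*s = 0" then have "a = 2*s" by simp
    then have "a^2 - 4*b = (2*s)^2 - 4*s^2" using assms(1) by simp
    also have "\<dots> = 0" by (simp add: power2_eq_square)
    finally have "a^2 - 4*b = 0" .
    then show False using dq_nz by simp
  qed
  define t where "t = of_rat q / u"
  have "t \<in> Q_adj \<theta>" unfolding t_def u_def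
    by (intro Q_div Q_rat Q_add Q_mult Q_pow Q_th)
  have "t^2 = of_rat (q^2) / of_rat (-a + 2*s)" unfolding t_def using u2
    by (simp add: power_divide of_rat_power)
  also have "\<dots> = of_rat r" using assms ns by (simp flip: of_rat_divide) (simp add: field_simps)
  finally show ?thesis unfolding squares_in_def using \<open>t \<in> Q_adj \<theta>\<close> by (metis (mono_tags, lifting) mem_Collect_eq)
qed

end

context setup12 begin

lemma Fsq1: assumes "inF A" "A^2 = of_rat r" "of_rat r \<notin> rat_squares"
  shows "of_rat r * of_rat (a^2 - 4*b) \<in> rat_squares"
proof -
  obtain l m where A: "A = of_rat l + of_rat m * \<theta>^6" using assms(1) unfolding inF_def by blast
  have "A^2 = of_rat l ^ 2 + 2 * of_rat l * of_rat m * \<theta>^6 + of_rat m ^ 2 * (\<theta>^6 * \<theta>^6)"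
    unfolding A by (simp add: power2_eq_square algebra_simps)
  also have "\<dots> = of_rat (l^2 - b*m^2) + of_rat (2*l*m - a*m^2) * \<theta>^6"
    unfolding yy by (simp add: algebra_simps of_rat_diff of_rat_mult of_rat_power)
  finally have "of_rat (l^2 - b*m^2 - r) + of_rat (2*l*m - a*m^2) * \<theta>^6 = 0"
    using assms(2) by (simp add: of_rat_diff)
  from indepF1[OF this] have e1: "l^2 - b*m^2 = r" and e2: "2*l*m = a*m^2" by auto
  have "m \<noteq> 0"
  proof
    assume "m = 0" then have "of_rat r = of_rat (l^2)" using e1 by simp
    then show False using assms(3) unfolding rat_squares_def by blast
  qed
  then have "2*l = a*m" using e2 by (simp add: power2_eq_square)
  then have hm: "m^2*(a^2-4*b) = 4*r" using e1 by algebra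
  have "(m*(a^2-4*b)/2)^2 = (m^2*(a^2-4*b))*(a^2-4*b)/4" by (simp add: power2_eq_square)
  also have "\<dots> = r * (a^2 - 4*b)" unfolding hm by simp
  finally have "r * (a^2 - 4*b) = (m*(a^2-4*b)/2)^2" by simp
  then have "of_rat r * of_rat (a^2 - 4*b) = (of_rat ((m*(a^2-4*b)/2)^2) :: complex)"
    by (metis of_rat_mult)
  then show ?thesis unfolding rat_squares_def by blast
qed

lemma Fsq2: assumes "inF B" "B^2 * \<theta>^6 = of_rat r" "r \<noteq> 0"
  shows "of_rat r * (- of_rat a + 2 * csqrt (of_rat b)) \<in> rat_squares \<or>
         of_rat r * (- of_rat a - 2 * csqrt (of_rat b)) \<in> rat_squares"
proof -
  obtain l m where B: "B = of_rat l + of_rat m * \<theta>^6" using assms(1) unfolding inF_def by blast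
  define y where "y = \<theta>^6"
  have Y2: "y * y = - of_rat a * y - of_rat b" unfolding y_def by (rule yy)
  have "B^2 * y = (-2*of_rat b*of_rat l*of_rat m + of_rat a*of_rat b*of_rat m^2) + (of_rat l^2 - 2*of_rat a*of_rat l*of_rat m + (of_rat a^2-of_rat b)*of_rat m^2)*y"
    using Y2 unfolding B y_def[symmetric] by algebra
  also have "\<dots> = of_rat (-2*b*l*m + a*b*m^2) + of_rat (l^2 - 2*a*l*m + (a^2-b)*m^2) * y"
    by (simp add: of_rat_diff of_rat_mult of_rat_power of_rat_add of_rat_minus)
  finally have "of_rat (-2*b*l*m + a*b*m^2 - r) + of_rat (l^2 - 2*a*l*m + (a^2-b)*m^2) * \<theta>^6 = 0"
    using assms(2) unfolding y_def by (simp add: of_rat_diff)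
  from indepF1[OF this] have e1: "-2*b*l*m + a*b*m^2 = r" and e2: "l^2 - 2*a*l*m + (a^2-b)*m^2 = 0" by auto
  have "m \<noteq> 0"
  proof
    assume "m = 0" then show False using e1 assms(3) by simp
  qed
  define \<sigma> where "\<sigma> = (l - a*m)/m"
  have l: "l = (a + \<sigma>) * m" unfolding \<sigma>_def using \<open>m \<noteq> 0\<close> by (simp add: field_simps)
  have "(\<sigma>^2 - b) * m^2 = 0" using e2 unfolding l by (simp add: power2_eq_square algebra_simps)
  then have sb: "\<sigma>^2 = b" using \<open>m \<noteq> 0\<close> by simp
  have "r * (-a - 2*\<sigma>) = (\<sigma>*m*(-a-2*\<sigma>))^2" using e1 unfolding l sb[symmetric]
    by (simp add: power2_eq_square algebra_simps flip: e1)
  then have sq: "of_rat r * of_rat (-a - 2*\<sigma>) = (of_rat ((\<sigma>*m*(-a-2*\<sigma>))^2) :: complex)"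
    by (metis of_rat_mult)
  have cs: "csqrt (of_rat b) = of_rat \<bar>\<sigma>\<bar>" using csqrt_rat[of \<sigma>] sb by simp
  show ?thesis
  proof (cases "\<sigma> \<ge> 0")
    case True
    then have "(of_rat (-a - 2*\<sigma>) :: complex) = - of_rat a - 2 * csqrt (of_rat b)"
      unfolding cs by (simp add: of_rat_diff of_rat_minus of_rat_mult)
    then show ?thesis using sq unfolding rat_squares_def by auto
  next
    case False
    then have "(of_rat (-a - 2*\<sigma>) :: complex) = - of_rat a + 2 * csqrt (of_rat b)"
      unfolding cs by (simp add: of_rat_diff of_rat_minus of_rat_mult)
    then show ?thesis using sq unfolding rat_squares_def by auto
  qed
qed


lemma fwd: assumes "t \<in> Q_adj \<theta>" "t^2 = of_rat r" "of_rat r \<notin> rat_squares"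
  shows "of_rat r * of_rat (a ^ 2 - 4 * b) \<in> rat_squares \<or>
         of_rat r * (- of_rat a + 2 * csqrt (of_rat b)) \<in> rat_squares \<or>
         of_rat r * (- of_rat a - 2 * csqrt (of_rat b)) \<in> rat_squares"
proof -
  have r0: "r \<noteq> 0"
  proof
    assume "r = 0" then have "of_rat r = of_rat (0^2)" by simp
    then show False using assms(3) unfolding rat_squares_def by blast
  qed
  obtain c where t: "t = (\<Sum>j<12. of_rat (c j) * \<theta>^j)" using represent[OF assms(1)] by blast
  define X where "X = (\<lambda>j. of_rat (c j) + of_rat (c (j+6)) * \<theta>^6)"
  have XF: "inF (X j)" for j unfolding X_def inF_def by blast
  define E where "E = X 0 + X 2 * \<theta>^2 + X 4 * \<theta>^4"
  define Od where "Od = X 1 + X 3 * \<theta>^2 + X 5 * \<theta>^4"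
  have EE: "Ev E" unfolding E_def by (rule EvI) (auto simp: XF)
  have EO: "Ev Od" unfolding Od_def by (rule EvI) (auto simp: XF)
  have tEO: "t = E + \<theta> * Od" unfolding t E_def Od_def X_def
    by (simp add: eval_nat_numeral algebra_simps)
  have "(E^2 + \<theta>^2 * Od^2 - of_rat r) + \<theta> * (2 * E * Od) = t^2 - of_rat r"
    unfolding tEO by (simp add: power2_eq_square algebra_simps)
  then have h: "(E^2 + \<theta>^2 * Od^2 - of_rat r) + \<theta> * (2 * E * Od) = 0" using assms(2) by simp
  have Ev1: "Ev (E^2 + \<theta>^2 * Od^2 - of_rat r)" unfolding power2_eq_square
    by (intro Ev_diff Ev_add Ev_mult Ev_th2[unfolded power2_eq_square] EE EO Ev_F inF_rat)
  have Ev2: "Ev (2 * E * Od)"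
    by (intro Ev_mult EE EO Ev_F) (use inF_rat[of 2] in simp)
  have "2 * E * Od = 0" by (rule Ev_split(2)[OF Ev1 Ev2 h])
  then consider "Od = 0" | "E = 0" by auto
  then show ?thesis
  proof cases
    case 1
    obtain A B C where F: "inF A" "inF B" "inF C" and E: "E = A + B * \<theta>^2 + C * \<theta>^4"
      using EE unfolding Ev_def by blast
    have "(A^2 + 2*B*C*\<theta>^6 - of_rat r) + (2*A*B + C^2*\<theta>^6) * \<theta>^2 + (B^2 + 2*A*C) * \<theta>^4 = t^2 - of_rat r"
      unfolding tEO 1 E by algebra
    then have "(A^2 + 2*B*C*\<theta>^6 - of_rat r) + (2*A*B + C^2*\<theta>^6) * \<theta>^2 + (B^2 + 2*A*C) * \<theta>^4 = 0"
      using assms(2) by simp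
    moreover have i2: "inF 2" using inF_rat[of 2] by simp
    ultimately have h1: "A^2 + 2*B*C*\<theta>^6 - of_rat r = 0" and h2: "2*A*B + C^2*\<theta>^6 = 0" and h3: "B^2 + 2*A*C = 0"
      using indepF3[of "A^2 + 2*B*C*\<theta>^6 - of_rat r" "2*A*B + C^2*\<theta>^6" "B^2 + 2*A*C"] F by simp_all
    have "B^3 = C^3 * \<theta>^6" using h2 h3 by algebra
    then have C0: "C = 0" using cube F by blast
    then have "B = 0" using h3 by simp
    then have "t = A" unfolding tEO 1 E using C0 by simp
    then have "A^2 = of_rat r" using assms(2) by simp
    then show ?thesis using Fsq1 F(1) assms(3) by blast
  next
    case 2
    obtain A B C where F: "inF A" "inF B" "inF C" and Od: "Od = A + B * \<theta>^2 + C * \<theta>^4"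
      using EO unfolding Ev_def by blast
    have "((B^2 + 2*A*C)*\<theta>^6 - of_rat r) + (A^2 + 2*B*C*\<theta>^6) * \<theta>^2 + (2*A*B + C^2*\<theta>^6) * \<theta>^4 = t^2 - of_rat r"
      unfolding tEO 2 Od by algebra
    then have "((B^2 + 2*A*C)*\<theta>^6 - of_rat r) + (A^2 + 2*B*C*\<theta>^6) * \<theta>^2 + (2*A*B + C^2*\<theta>^6) * \<theta>^4 = 0"
      using assms(2) by simp
    moreover have i2: "inF 2" using inF_rat[of 2] by simp
    ultimately have h1: "(B^2 + 2*A*C)*\<theta>^6 - of_rat r = 0" and h2: "A^2 + 2*B*C*\<theta>^6 = 0" and h3: "2*A*B + C^2*\<theta>^6 = 0"
      using indepF3[of "(B^2 + 2*A*C)*\<theta>^6 - of_rat r" "A^2 + 2*B*C*\<theta>^6" "2*A*B + C^2*\<theta>^6"] F by simp_all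
    have y0: "\<theta>^6 \<noteq> 0" using theta_nz by simp
    have "\<theta>^6 * (C * (C^3 * \<theta>^6 + 8 * B^3)) = 0" using h2 h3 by algebra
    then have "C * (C^3 * \<theta>^6 + 8 * B^3) = 0" using y0 by simp
    then have C0: "C = 0"
    proof (cases "C = 0")
      case False
      assume "C * (C^3 * \<theta>^6 + 8 * B^3) = 0"
      then have "C^3 * \<theta>^6 + 8 * B^3 = 0" using False by simp
      then have "(-2*B)^3 = C^3 * \<theta>^6" by algebra
      moreover have "inF (-2*B)" using F inF_mult[of "-2" B] inF_rat[of "-2"] by simp
      ultimately show "C = 0" using cube[of "-2*B" C] F by blast
    qed simp
    then have "A = 0" using h2 by simp
    then have "t = \<theta>^3 * B" unfolding tEO 2 Od using C0 by algebra
    then have "B^2 * \<theta>^6 = of_rat r" using assms(2) by algebra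
    then have "of_rat r * (- of_rat a + 2 * csqrt (of_rat b)) \<in> rat_squares \<or>
         of_rat r * (- of_rat a - 2 * csqrt (of_rat b)) \<in> rat_squares"
      using Fsq2 F(2) r0 by blast
    then show ?thesis by blast
  qed
qed

end

lemma csqrt_rat_eq:
  assumes "r \<noteq> 0" "of_rat r * (- of_rat a + 2 * c) = (of_rat (q^2) :: complex)"
  shows "c = of_rat ((q^2/r + a)/2)"
proof -
  have "(of_rat r :: complex) \<noteq> 0" using assms(1) by simp
  then have "- of_rat a + 2 * c = of_rat (q^2) / of_rat r" using assms(2)
    by (simp add: eq_divide_eq mult.commute)
  then have "2 * c = of_rat (q^2) / of_rat r + of_rat a" by (simp add: algebra_simps)
  then have "c = (of_rat (q^2) / of_rat r + of_rat a) / 2" by (metis nonzero_mult_div_cancel_left zero_neq_numeral)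
  then show ?thesis by (simp add: of_rat_divide of_rat_add)
qed

theorem proposition3p3:
  fixes a b r :: rat and \<theta> :: complex
  assumes irr: "irreducible (monom 1 12 + monom a 6 + [:b:] :: rat poly)"
    and root: "poly (map_poly of_rat (monom 1 12 + monom a 6 + [:b:])) \<theta> = 0"
    and nonsq: "of_rat r \<notin> rat_squares"
  shows "of_rat r \<in> squares_in (Q_adj \<theta>) \<longleftrightarrow>
           (of_rat r * of_rat (a ^ 2 - 4 * b) \<in> rat_squares \<or>
            of_rat r * (- of_rat a + 2 * csqrt (of_rat b)) \<in> rat_squares \<or>
            of_rat r * (- of_rat a - 2 * csqrt (of_rat b)) \<in> rat_squares)"
proof -
  interpret setup12 a b \<theta> using irr root by unfold_locales
  have r0: "r \<noteq> 0"
  proof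
    assume "r = 0" then have "of_rat r = of_rat (0^2)" by simp
    then show False using nonsq unfolding rat_squares_def by blast
  qed
  show ?thesis
  proof
    assume "of_rat r \<in> squares_in (Q_adj \<theta>)"
    then obtain t where "t \<in> Q_adj \<theta>" "t^2 = of_rat r" unfolding squares_in_def by auto
    then show "of_rat r * of_rat (a ^ 2 - 4 * b) \<in> rat_squares \<or>
            of_rat r * (- of_rat a + 2 * csqrt (of_rat b)) \<in> rat_squares \<or>
            of_rat r * (- of_rat a - 2 * csqrt (of_rat b)) \<in> rat_squares"
      using fwd nonsq by blast
  next
    assume "of_rat r * of_rat (a ^ 2 - 4 * b) \<in> rat_squares \<or>
            of_rat r * (- of_rat a + 2 * csqrt (of_rat b)) \<in> rat_squares \<or>
            of_rat r * (- of_rat a - 2 * csqrt (of_rat b)) \<in> rat_squares"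
    then consider (c1) q where "of_rat r * of_rat (a ^ 2 - 4 * b) = (of_rat (q^2) :: complex)"
      | (c2) q where "of_rat r * (- of_rat a + 2 * csqrt (of_rat b)) = (of_rat (q^2) :: complex)"
      | (c3) q where "of_rat r * (- of_rat a - 2 * csqrt (of_rat b)) = (of_rat (q^2) :: complex)"
      unfolding rat_squares_def by blast
    then show "of_rat r \<in> squares_in (Q_adj \<theta>)"
    proof cases
      case (c1 q)
      then have "r * (a^2 - 4*b) = q^2" by (metis of_rat_eq_iff of_rat_mult)
      then show ?thesis by (rule back1)
    next
      case (c2 q)
      define s where "s = (q^2/r + a)/2"
      have cs: "csqrt (of_rat b) = of_rat s" unfolding s_def by (rule csqrt_rat_eq[OF r0 c2])
      have "(of_rat s)^2 = (csqrt (of_rat b))^2" using cs by simp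
      also have "\<dots> = of_rat b" by simp
      finally have "of_rat (s^2) = (of_rat b :: complex)" by (simp add: of_rat_power)
      then have sb: "s^2 = b" by simp
      have "of_rat (r * (-a + 2*s)) = (of_rat (q^2) :: complex)" using c2 cs
        by (simp add: of_rat_mult of_rat_add of_rat_minus of_rat_diff)
      then have "r * (-a + 2*s) = q^2" by simp
      then show ?thesis by (rule back2[OF sb])
    next
      case (c3 q)
      have c3': "of_rat r * (- of_rat a + 2 * (- csqrt (of_rat b))) = (of_rat (q^2) :: complex)"
        using c3 by simp
      define s where "s = (q^2/r + a)/2"
      have cs: "- csqrt (of_rat b) = of_rat s" unfolding s_def by (rule csqrt_rat_eq[OF r0 c3'])
      have "(of_rat s)^2 = (- csqrt (of_rat b))^2" using cs by simp
      also have "\<dots> = of_rat b" by simp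
      finally have "of_rat (s^2) = (of_rat b :: complex)" by (simp add: of_rat_power)
      then have sb: "s^2 = b" by simp
      have "of_rat (r * (-a + 2*s)) = (of_rat (q^2) :: complex)" using c3' cs
        by (simp add: of_rat_mult of_rat_add of_rat_minus of_rat_diff)
      then have "r * (-a + 2*s) = q^2" by simp
      then show ?thesis by (rule back2[OF sb])
    qed
  qed
qed

end
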